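(* Let $f\colon(0,\infty)\to\mathbb{R}$ be such that $x\mapsto f(|x|)$ is integrable on $\mathbb{R}^n\setminus\{0\}$, and let $h\colon\mathbb{R}^n\to\mathbb{R}$ be continuous, positive definite, and integrable with $h(x)\le f(|x|)$ for all $x\in\mathbb{R}^n\setminus\{0\}$. Let $\rho>0$ and $r>0$ satisfy $\mathrm{vol}(B^n_r(0))=1/\rho$. Then \[ \rho\,\widehat h(0)-h(0)\le\rho\int_{\mathbb{R}^n\setminus B^n_r(0)}f(|x|)\,dx. \]
   Context: A continuous function $h\colon\mathbb{R}^n\to\mathbb{C}$ is positive definite if $h(-x)=\overline{h(x)}$ for all $x$ and for all $N$ and $x_1,\dots,x_N\in\mathbb{R}^n$ the matrix $(h(x_j-x_k))_{1\le j,k\le N}$ is positive semidefinite. The Fourier transform is $\widehat h(y)=\int_{\mathbb{R}^n}h(x)e^{-2\pi i\langle x,y\rangle}\,dx$. $B^n_r(0)$ is the closed ball of radius $r$ about the origin. *)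

theory Defs
  imports "HOL-Analysis.Analysis"
begin

definition positive_definite :: "('a::euclidean_space \<Rightarrow> complex) \<Rightarrow> bool" where
  "positive_definite h \<longleftrightarrow>
     continuous_on UNIV h \<and>
     (\<forall>x. h (-x) = cnj (h x)) \<and>
     (\<forall>(N::nat) (xs::nat \<Rightarrow> 'a) (c::nat \<Rightarrow> complex).
        let q = (\<Sum>j<N. \<Sum>k<N. c j * cnj (c k) * h (xs j - xs k)) in
        Im q = 0 \<and> Re q \<ge> 0)"

definition fourier_transform :: "('a::euclidean_space \<Rightarrow> complex) \<Rightarrow> 'a \<Rightarrow> complex" where
  "fourier_transform h y =
     integral\<^sup>L lebesgue (\<lambda>x. h x * exp (- 2 * complex_of_real pi * \<i> * complex_of_real (x \<bullet> y)))"

end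

theory Submission
  imports Defs
begin

lemma pd_le0:
  fixes h :: "'a::euclidean_space \<Rightarrow> real"
  assumes h_pd: "positive_definite (\<lambda>x. complex_of_real (h x))"
  shows "h x \<le> h 0"
proof -
  from h_pd have sym: "complex_of_real (h (-x)) = cnj (complex_of_real (h x))"
    and q: "\<And>xs c. Re (\<Sum>j<(2::nat). \<Sum>k<2. c j * cnj (c k) * complex_of_real (h (xs j - xs k))) \<ge> 0"
    unfolding positive_definite_def Let_def by (blast, meson)
  have s: "h (-x) = h x" using sym by (metis Complex.complex_cnj_complex_of_real of_real_eq_iff)
  have "Re (\<Sum>j<2. \<Sum>k<2. (\<lambda>i. if i = 0 then (1::complex) else -1) j * cnj ((\<lambda>i. if i = 0 then (1::complex) else -1) k)
      * complex_of_real (h ((\<lambda>i::nat. if i = 0 then x else 0) j - (\<lambda>i::nat. if i = 0 then x else 0) k))) \<ge> 0"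
    by (rule q)
  hence "2 * h 0 - h x - h (-x) \<ge> 0"
    by (simp add: numeral_2_eq_2 lessThan_Suc)
  thus ?thesis using s by simp
qed

theorem lemma8p3:
  fixes f :: "real \<Rightarrow> real" and h :: "'a::euclidean_space \<Rightarrow> real" and \<rho> r :: real
  assumes f_int: "set_integrable lebesgue (UNIV - {0}) (\<lambda>x::'a. f (norm x))"
    and h_cont: "continuous_on UNIV h"
    and h_pd: "positive_definite (\<lambda>x. complex_of_real (h x))"
    and h_int: "integrable lebesgue h"
    and h_le: "\<And>x. x \<noteq> 0 \<Longrightarrow> h x \<le> f (norm x)"
    and \<rho>_pos: "\<rho> > 0" and r_pos: "r > 0"
    and vol: "measure lebesgue (cball (0::'a) r) = 1 / \<rho>"
  shows "\<rho> * Re (fourier_transform (\<lambda>x. complex_of_real (h x)) 0) - h 0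
           \<le> \<rho> * (\<integral>x \<in> - cball (0::'a) r. f (norm x) \<partial>lebesgue)"
proof -
  let ?B = "cball (0::'a) r"
  have FT: "Re (fourier_transform (\<lambda>x. complex_of_real (h x)) 0) = integral\<^sup>L lebesgue h"
    unfolding fourier_transform_def by simp
  have Bs: "?B \<in> sets lebesgue" by simp
  have Cs: "- ?B \<in> sets lebesgue" by (simp add: sets.compl_sets)
  have hB: "set_integrable lebesgue ?B h"
    unfolding set_integrable_def by (rule integrable_mult_indicator[OF Bs h_int])
  have hC: "set_integrable lebesgue (- ?B) h"
    unfolding set_integrable_def by (rule integrable_mult_indicator[OF Cs h_int])
  have split: "integral\<^sup>L lebesgue h = (\<integral>x \<in> ?B. h x \<partial>lebesgue) + (\<integral>x \<in> - ?B. h x \<partial>lebesgue)"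
  proof -
    have "(\<integral>x \<in> ?B \<union> - ?B. h x \<partial>lebesgue) = (\<integral>x \<in> ?B. h x \<partial>lebesgue) + (\<integral>x \<in> - ?B. h x \<partial>lebesgue)"
      by (rule set_integral_Un) (use hB hC in auto)
    moreover have "(\<integral>x \<in> ?B \<union> - ?B. h x \<partial>lebesgue) = integral\<^sup>L lebesgue h"
      by (simp add: set_lebesgue_integral_def)
    ultimately show ?thesis by simp
  qed
  have fin: "emeasure lebesgue ?B \<noteq> \<infinity>"
  proof
    assume "emeasure lebesgue ?B = \<infinity>"
    hence "measure lebesgue ?B = 0" by (simp add: measure_def)
    thus False using vol \<rho>_pos by simp
  qed
  have cB: "set_integrable lebesgue ?B (\<lambda>_. h 0)"
    using fin by (simp add: top.not_eq_extremum)
  have I1: "(\<integral>x \<in> ?B. h x \<partial>lebesgue) \<le> (\<integral>x \<in> ?B. h 0 \<partial>lebesgue)"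
    by (rule set_integral_mono[OF hB cB]) (rule pd_le0[OF h_pd])
  have I1': "(\<integral>x \<in> ?B. h 0 \<partial>lebesgue) = h 0 / \<rho>"
    using set_integral_const[OF Bs fin, of "h 0"] vol by simp
  have fC: "set_integrable lebesgue (- ?B) (\<lambda>x. f (norm x))"
    by (rule set_integrable_subset[OF f_int Cs]) (use r_pos in auto)
  have I2: "(\<integral>x \<in> - ?B. h x \<partial>lebesgue) \<le> (\<integral>x \<in> - ?B. f (norm x) \<partial>lebesgue)"
    by (rule set_integral_mono[OF hC fC], rule h_le) (use r_pos in auto)
  have "integral\<^sup>L lebesgue h \<le> h 0 / \<rho> + (\<integral>x \<in> - ?B. f (norm x) \<partial>lebesgue)"
    using split I1 I1' I2 by linarith
  hence "\<rho> * integral\<^sup>L lebesgue h \<le> \<rho> * (h 0 / \<rho> + (\<integral>x \<in> - ?B. f (norm x) \<partial>lebesgue))"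
    using \<rho>_pos by (simp add: mult_left_mono)
  thus ?thesis using \<rho>_pos FT by (simp add: algebra_simps)
qed

end
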